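(* Let $X=\{x_j:j\in J\}\subset\mathbb{R}^2$ be finite with $n=|J|$. If there exist weights $\tau_j\geq\frac{1}{n+1}$ ($j\in J$) with $\sum_j\tau_j=1$ and $s=\sum_j\tau_jx_j$, then $s\in\mathrm{conv}(\mathcal{M})$.
   Context: $\mathcal{M}=\{M_j:j\in J\}$ with $M_j=\frac{1}{n+1}\big(x_j+\sum_{i\in J}x_i\big)$. *)

theory Defs
  imports "HOL-Analysis.Analysis"
begin

definition M_point :: "('j \<Rightarrow> real^2) \<Rightarrow> 'j set \<Rightarrow> 'j \<Rightarrow> real^2" where
  "M_point x J j = (1 / (real (card J) + 1)) *\<^sub>R (x j + (\<Sum>i\<in>J. x i))"

end

theory Submission
  imports Defs
begin

theorem lemma7:
  fixes x :: "'j \<Rightarrow> real^2" and J :: "'j set" and \<tau> :: "'j \<Rightarrow> real" and s :: "real^2"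
  assumes "finite J"
    and "inj_on x J"
    and "\<forall>j\<in>J. \<tau> j \<ge> 1 / (real (card J) + 1)"
    and "(\<Sum>j\<in>J. \<tau> j) = 1"
    and "s = (\<Sum>j\<in>J. \<tau> j *\<^sub>R x j)"
  shows "s \<in> convex hull (M_point x J ` J)"
proof -
  define N where "N = real (card J) + 1"
  have Npos: "N > 0" unfolding N_def by simp
  define \<mu> where "\<mu> j = N * \<tau> j - 1" for j
  have mu0: "\<forall>j\<in>J. 0 \<le> \<mu> j"
  proof
    fix j assume "j \<in> J"
    then have "1 / N \<le> \<tau> j" using assms(3) N_def by auto
    then show "0 \<le> \<mu> j" unfolding \<mu>_def using Npos by (simp add: field_simps)
  qed
  have mu1: "(\<Sum>j\<in>J. \<mu> j) = 1"
    unfolding \<mu>_def using assms(4) by (simp add: sum_subtractf sum_distrib_left[symmetric] N_def)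
  define S where "S = (\<Sum>i\<in>J. x i)"
  have "(\<Sum>j\<in>J. \<mu> j *\<^sub>R M_point x J j)
      = (1/N) *\<^sub>R ((\<Sum>j\<in>J. \<mu> j *\<^sub>R x j) + (\<Sum>j\<in>J. \<mu> j) *\<^sub>R S)"
    unfolding M_point_def N_def[symmetric] S_def[symmetric]
    by (simp add: scaleR_add_right sum.distrib scaleR_right.sum scaleR_sum_left)
  also have "(\<Sum>j\<in>J. \<mu> j *\<^sub>R x j) = N *\<^sub>R s - S"
    unfolding \<mu>_def assms(5) S_def
    by (simp add: scaleR_diff_left sum_subtractf scaleR_right.sum)
  finally have eq: "(\<Sum>j\<in>J. \<mu> j *\<^sub>R M_point x J j) = s"
    using mu1 Npos by simp
  have "(\<Sum>j\<in>J. \<mu> j *\<^sub>R M_point x J j) \<in> convex hull (M_point x J ` J)"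
    by (rule convex_sum) (use assms(1) mu0 mu1 in \<open>auto intro: hull_subset[THEN subsetD]\<close>)
  then show ?thesis using eq by simp
qed

end
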